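(* If a \textsc{2-Visits} instance has a feasible schedule, then it has a feasible schedule in which (1) all secondary visits are placed in gaps (equivalently, no primary visit is placed in a gap), and (2) the secondary visits appear in the schedule in order of non-decreasing induced deadlines.
   Context: \textsc{2-Visits} (primary/secondary formulation): given a non-decreasing sequence of $n$ positive integers $d_1\le\dots\le d_n$, decide whether there exists a schedule of length $2n$ (each position $1,\dots,2n$ holds one visit) containing one primary and one secondary visit of each node $i\in[n]$, such that the primary visit of $i$ is at position at most $d_i$, and the secondary visit of $i$ is either before its primary visit or at most $d_i$ positions after its primary visit. Such a schedule is feasible. The discretized sequence $A=\langle a_1,\dots,a_n\rangle$ is defined by $a_n=d_n$ and $a_i=\min\{a_{i+1}-1,d_i\}$ for $i<n$. A position $p\in[2n]$ is a gap if $p\notin\{a_1,\dots,a_n\}$. If the primary visit of node $i$ is at position $t_i$, its induced deadline is $d_i'=d_i+t_i$. Standing assumptions: all entries of $A$ are positive and all deadlines satisfy $d_i\le 2n$ (so there are exactly $n$ gaps in $[2n]$). *)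

theory Defs
  imports Main
begin

(* Instance: n nodes indexed 1..n with deadlines d 1, ..., d n.
   Positions are 1..2n. A schedule is given by the primary position t i
   and the secondary position s i of each node i. *)

definition is_schedule :: "nat \<Rightarrow> (nat \<Rightarrow> nat) \<Rightarrow> (nat \<Rightarrow> nat) \<Rightarrow> bool" where
  "is_schedule n t s \<longleftrightarrow>
     bij_betw (\<lambda>(b, i). if b then t i else s i) (UNIV \<times> {1..n}) {1..2*n}"

definition feasible :: "nat \<Rightarrow> (nat \<Rightarrow> nat) \<Rightarrow> (nat \<Rightarrow> nat) \<Rightarrow> (nat \<Rightarrow> nat) \<Rightarrow> bool" where
  "feasible n d t s \<longleftrightarrow> is_schedule n t s \<and>
     (\<forall>i\<in>{1..n}. t i \<le> d i \<and> (s i < t i \<or> s i \<le> t i + d i))"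

(* discretized sequence: a_n = d_n, a_i = min (a_(i+1) - 1) d_i;
   disc_aux d n k = a_(n-k) *)
primrec disc_aux :: "(nat \<Rightarrow> nat) \<Rightarrow> nat \<Rightarrow> nat \<Rightarrow> int" where
  "disc_aux d n 0 = int (d n)"
| "disc_aux d n (Suc k) = min (disc_aux d n k - 1) (int (d (n - Suc k)))"

definition disc :: "(nat \<Rightarrow> nat) \<Rightarrow> nat \<Rightarrow> nat \<Rightarrow> int" where
  "disc d n i = disc_aux d n (n - i)"

definition is_gap :: "(nat \<Rightarrow> nat) \<Rightarrow> nat \<Rightarrow> nat \<Rightarrow> bool" where
  "is_gap d n p \<longleftrightarrow> p \<in> {1..2*n} \<and> int p \<notin> disc d n ` {1..n}"

definition induced_deadline :: "(nat \<Rightarrow> nat) \<Rightarrow> (nat \<Rightarrow> nat) \<Rightarrow> nat \<Rightarrow> nat" where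
  "induced_deadline d t i = d i + t i"

end

theory Submission imports Defs begin

lemma disc_last: "disc d n n = int (d n)" by (simp add: disc_def)

lemma disc_step: assumes "i < n" shows "disc d n i = min (disc d n (Suc i) - 1) (int (d i))"
proof -
  have e: "n - i = Suc (n - Suc i)" using assms by simp
  have e2: "n - Suc (n - Suc i) = i" using assms by simp
  show ?thesis unfolding disc_def e by (simp add: e2)
qed

definition sw :: "'a \<Rightarrow> 'a \<Rightarrow> 'a \<Rightarrow> 'a" where
  "sw u v x = (if x = u then v else if x = v then u else x)"

lemma sw_bij: assumes "u \<in> D" "v \<in> D" shows "bij_betw (sw u v) D D"
  by (rule bij_betw_byWitness[where f'="sw u v"]) (use assms in \<open>auto simp: sw_def\<close>)

lemma bij_sw: "bij_betw f D P \<Longrightarrow> u \<in> D \<Longrightarrow> v \<in> D \<Longrightarrow> bij_betw (f \<circ> sw u v) D P"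
  by (metis bij_betw_trans sw_bij)


definition aa :: "(nat \<Rightarrow> nat) \<Rightarrow> nat \<Rightarrow> nat \<Rightarrow> nat" where
  "aa d n i = nat (disc d n i)"

context
  fixes n :: nat and d :: "nat \<Rightarrow> nat"
  assumes mono: "\<forall>i j. 1 \<le> i \<and> i \<le> j \<and> j \<le> n \<longrightarrow> d i \<le> d j"
    and disc_pos: "\<forall>i\<in>{1..n}. 0 < disc d n i"
begin

lemma aa_int: assumes "i \<in> {1..n}" shows "int (aa d n i) = disc d n i"
proof -
  have "0 < disc d n i" using disc_pos assms by blast
  thus ?thesis by (simp add: aa_def)
qed

lemma aa_le_d: assumes "i \<in> {1..n}" shows "aa d n i \<le> d i"
proof (cases "i = n")
  case True thus ?thesis using aa_int[OF assms] disc_last[of d n] by simp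
next
  case False
  hence "i < n" using assms by auto
  thus ?thesis using aa_int[OF assms] disc_step[of i n d] by simp
qed

lemma aa_pos: assumes "i \<in> {1..n}" shows "1 \<le> aa d n i"
proof -
  have "0 < disc d n i" using disc_pos assms by blast
  thus ?thesis by (simp add: aa_def)
qed

lemma aa_step: assumes "1 \<le> i" "i < n" shows "aa d n i < aa d n (Suc i)"
proof -
  have "int (aa d n i) = disc d n i" "int (aa d n (Suc i)) = disc d n (Suc i)"
    using assms by (auto intro!: aa_int)
  thus ?thesis using disc_step[of i n d] assms by simp
qed

lemma aa_mono: "i \<in> {1..n} \<Longrightarrow> j \<le> n \<Longrightarrow> i < j \<Longrightarrow> aa d n i < aa d n j"
proof (induction j)
  case 0 thus ?case by simp
next
  case (Suc j)
  show ?case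
  proof (cases "i = j")
    case True thus ?thesis using aa_step[of i] Suc.prems by auto
  next
    case False
    hence "aa d n i < aa d n j" using Suc by auto
    also have "\<dots> < aa d n (Suc j)" using aa_step[of j] Suc.prems by auto
    finally show ?thesis .
  qed
qed

lemma aa_inj: "inj_on (aa d n) {1..n}"
proof (rule inj_onI)
  fix x y assume xy: "x \<in> {1..n}" "y \<in> {1..n}" "aa d n x = aa d n y"
  show "x = y"
  proof (rule ccontr)
    assume "x \<noteq> y"
    hence "x < y \<or> y < x" by arith
    thus False using aa_mono[of x y] aa_mono[of y x] xy by auto
  qed
qed

lemma aa_le_dn: assumes "i \<in> {1..n}" shows "aa d n i \<le> d n"
proof (cases "i = n")
  case True thus ?thesis using aa_le_d assms by auto
next
  case False
  hence "aa d n i < aa d n n" using aa_mono[of i n] assms by auto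
  thus ?thesis using aa_le_d[of n] assms by auto
qed

lemma aa_chain: "l \<in> {1..n} \<Longrightarrow> aa d n l < x \<Longrightarrow> x \<le> d l \<Longrightarrow> x \<in> aa d n ` {1..n}"
proof (induction "n - l" arbitrary: l)
  case 0
  hence "l = n" by auto
  thus ?case using 0 aa_int[of n] disc_last[of d n] by auto
next
  case (Suc k)
  hence ln: "l < n" by auto
  have l1: "Suc l \<in> {1..n}" using ln Suc.prems by auto
  have e: "disc d n l = min (disc d n (Suc l) - 1) (int (d l))" using disc_step[OF ln] .
  have "int (aa d n l) = disc d n l" "int (aa d n (Suc l)) = disc d n (Suc l)"
    using Suc.prems l1 by (auto intro!: aa_int)
  hence "aa d n (Suc l) = aa d n l + 1" using e Suc.prems by linarith
  hence le: "aa d n (Suc l) \<le> x" using Suc.prems by auto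
  show ?case
  proof (cases "aa d n (Suc l) = x")
    case True thus ?thesis using l1 by force
  next
    case False
    have "d l \<le> d (Suc l)" using mono Suc.prems ln by auto
    thus ?thesis using Suc.hyps(1)[of "Suc l"] Suc.hyps(2) l1 False le Suc.prems by auto
  qed
qed

lemma gap_iff: "is_gap d n p \<longleftrightarrow> p \<in> {1..2*n} \<and> p \<notin> aa d n ` {1..n}"
proof -
  have "int p \<in> disc d n ` {1..n} \<longleftrightarrow> p \<in> aa d n ` {1..n}"
  proof
    assume "int p \<in> disc d n ` {1..n}"
    then obtain i where "i \<in> {1..n}" "int p = disc d n i" by auto
    thus "p \<in> aa d n ` {1..n}" using aa_int[of i] by force
  next
    assume "p \<in> aa d n ` {1..n}"
    then obtain i where "i \<in> {1..n}" "p = aa d n i" by auto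
    thus "int p \<in> disc d n ` {1..n}" using aa_int[of i] by force
  qed
  thus ?thesis unfolding is_gap_def by auto
qed

end

lemma side:
  fixes f g :: "'a \<Rightarrow> nat"
  assumes "inj_on f N" "inj_on g N" "finite N" "x \<in> g ` N" "x \<notin> f ` N"
    and agree: "{p\<in>f ` N. x < p} = {p\<in>g ` N. x < p}"
    and h: "\<forall>l\<in>N. x \<le> g l \<longrightarrow> x < f l"
  shows False
proof -
  have sub: "{l\<in>N. x \<le> g l} \<subseteq> {l\<in>N. x < f l}" using h by auto
  have c1: "card {l\<in>N. x \<le> g l} = card {p\<in>g ` N. x \<le> p}"
  proof -
    have "{p\<in>g ` N. x \<le> p} = g ` {l\<in>N. x \<le> g l}" by auto
    moreover have "inj_on g {l\<in>N. x \<le> g l}" using assms(2) by (rule inj_on_subset) auto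
    ultimately show ?thesis by (simp add: card_image)
  qed
  have c2: "card {l\<in>N. x < f l} = card {p\<in>f ` N. x < p}"
  proof -
    have "{p\<in>f ` N. x < p} = f ` {l\<in>N. x < f l}" by auto
    moreover have "inj_on f {l\<in>N. x < f l}" using assms(1) by (rule inj_on_subset) auto
    ultimately show ?thesis by (simp add: card_image)
  qed
  have e: "{p\<in>g ` N. x \<le> p} = insert x {p\<in>g ` N. x < p}" using assms(4) by auto
  have fin: "finite {p\<in>g ` N. x < p}" using assms(3) by auto
  have "x \<notin> {p\<in>g ` N. x < p}" by auto
  hence c3: "card {p\<in>g ` N. x \<le> p} = Suc (card {p\<in>g ` N. x < p})" using e fin by simp
  have "card {l\<in>N. x \<le> g l} \<le> card {l\<in>N. x < f l}"
    using sub assms(3) by (intro card_mono) auto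
  thus False using c1 c2 c3 agree by simp
qed

lemma TA:
  fixes t a d :: "'a \<Rightarrow> nat"
  assumes it: "inj_on t N" and ia: "inj_on a N" and fin: "finite N"
    and ad: "\<forall>l\<in>N. a l \<le> d l" and td: "\<forall>l\<in>N. t l \<le> d l"
    and chA: "\<forall>l\<in>N. \<forall>x. a l < x \<and> x \<le> d l \<longrightarrow> x \<in> a ` N"
    and chT: "\<forall>l\<in>N. \<forall>x. t l < x \<and> x \<le> d l \<longrightarrow> x \<in> t ` N"
  shows "t ` N = a ` N"
proof (rule ccontr)
  define S where "S = (t ` N - a ` N) \<union> (a ` N - t ` N)"
  assume ne: "t ` N \<noteq> a ` N"
  hence "S \<noteq> {}" unfolding S_def by auto
  moreover have "finite S" unfolding S_def using fin by auto
  ultimately have xS: "Max S \<in> S" and mx: "\<forall>y\<in>S. y \<le> Max S" by auto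
  define x where "x = Max S"
  have agree: "{p\<in>t ` N. x < p} = {p\<in>a ` N. x < p}"
  proof -
    have "p \<notin> S" if "x < p" for p using mx that unfolding x_def by force
    thus ?thesis unfolding S_def by auto
  qed
  show False
  proof (cases "x \<in> t ` N")
    case True
    hence xa: "x \<notin> a ` N" using xS unfolding S_def x_def by auto
    have "\<forall>l\<in>N. x \<le> t l \<longrightarrow> x < a l"
    proof (intro ballI impI)
      fix l assume l: "l \<in> N" "x \<le> t l"
      have "a l \<noteq> x" using xa l by auto
      moreover have "\<not> a l < x" using chA l td xa by force
      ultimately show "x < a l" by simp
    qed
    thus False using side[OF ia it fin True xa] agree by simp
  next
    case False
    hence xa: "x \<in> a ` N" using xS unfolding S_def x_def by auto
    have "\<forall>l\<in>N. x \<le> a l \<longrightarrow> x < t l"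
    proof (intro ballI impI)
      fix l assume l: "l \<in> N" "x \<le> a l"
      have "t l \<noteq> x" using False l by auto
      moreover have "\<not> t l < x" using chT l ad False by force
      ultimately show "x < t l" by simp
    qed
    thus False using side[OF it ia fin xa False] agree by simp
  qed
qed

definition vis :: "(nat \<Rightarrow> nat) \<Rightarrow> (nat \<Rightarrow> nat) \<Rightarrow> bool \<times> nat \<Rightarrow> nat" where
  "vis t s = (\<lambda>(b, i). if b then t i else s i)"

lemma sched_vis: "is_schedule n t s \<longleftrightarrow> bij_betw (vis t s) (UNIV \<times> {1..n}) {1..2*n}"
  unfolding is_schedule_def vis_def by simp

lemma sched_facts:
  assumes "is_schedule n t s"
  shows "\<And>i. i \<in> {1..n} \<Longrightarrow> t i \<in> {1..2*n}"
    and "\<And>i. i \<in> {1..n} \<Longrightarrow> s i \<in> {1..2*n}"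
    and "\<And>i j. i \<in> {1..n} \<Longrightarrow> j \<in> {1..n} \<Longrightarrow> t i = t j \<Longrightarrow> i = j"
    and "\<And>i j. i \<in> {1..n} \<Longrightarrow> j \<in> {1..n} \<Longrightarrow> s i = s j \<Longrightarrow> i = j"
    and "\<And>i j. i \<in> {1..n} \<Longrightarrow> j \<in> {1..n} \<Longrightarrow> t i \<noteq> s j"
    and "\<And>x. x \<in> {1..2*n} \<Longrightarrow> (\<exists>i\<in>{1..n}. t i = x) \<or> (\<exists>i\<in>{1..n}. s i = x)"
proof -
  have b: "bij_betw (vis t s) (UNIV \<times> {1..n}) {1..2*n}" using assms sched_vis by auto
  hence im: "vis t s ` (UNIV \<times> {1..n}) = {1..2*n}" and inj: "inj_on (vis t s) (UNIV \<times> {1..n})"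
    by (auto simp: bij_betw_def)
  show "\<And>i. i \<in> {1..n} \<Longrightarrow> t i \<in> {1..2*n}"
  proof -
    fix i assume "i \<in> {1..n}"
    hence "vis t s (True, i) \<in> {1..2*n}" using im by blast
    thus "t i \<in> {1..2*n}" by (simp add: vis_def)
  qed
  show "\<And>i. i \<in> {1..n} \<Longrightarrow> s i \<in> {1..2*n}"
  proof -
    fix i assume "i \<in> {1..n}"
    hence "vis t s (False, i) \<in> {1..2*n}" using im by blast
    thus "s i \<in> {1..2*n}" by (simp add: vis_def)
  qed
  show "\<And>i j. i \<in> {1..n} \<Longrightarrow> j \<in> {1..n} \<Longrightarrow> t i = t j \<Longrightarrow> i = j"
  proof -
    fix i j assume "i \<in> {1..n}" "j \<in> {1..n}" "t i = t j"
    hence "vis t s (True, i) = vis t s (True, j)" by (simp add: vis_def)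
    thus "i = j" using inj_onD[OF inj] \<open>i \<in> {1..n}\<close> \<open>j \<in> {1..n}\<close> by blast
  qed
  show "\<And>i j. i \<in> {1..n} \<Longrightarrow> j \<in> {1..n} \<Longrightarrow> s i = s j \<Longrightarrow> i = j"
  proof -
    fix i j assume "i \<in> {1..n}" "j \<in> {1..n}" "s i = s j"
    hence "vis t s (False, i) = vis t s (False, j)" by (simp add: vis_def)
    thus "i = j" using inj_onD[OF inj] \<open>i \<in> {1..n}\<close> \<open>j \<in> {1..n}\<close> by blast
  qed
  show "\<And>i j. i \<in> {1..n} \<Longrightarrow> j \<in> {1..n} \<Longrightarrow> t i \<noteq> s j"
  proof -
    fix i j assume ij: "i \<in> {1..n}" "j \<in> {1..n}"
    have "(True, i) \<noteq> (False, j)" by simp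
    hence "vis t s (True, i) \<noteq> vis t s (False, j)"
      using inj_onD[OF inj, of "(True, i)" "(False, j)"] ij by blast
    thus "t i \<noteq> s j" by (simp add: vis_def)
  qed
  show "\<And>x. x \<in> {1..2*n} \<Longrightarrow> (\<exists>i\<in>{1..n}. t i = x) \<or> (\<exists>i\<in>{1..n}. s i = x)"
  proof -
    fix x assume "x \<in> {1..2*n}"
    hence "x \<in> vis t s ` (UNIV \<times> {1..n})" using im by simp
    then obtain p where p: "p \<in> UNIV \<times> {1..n}" "vis t s p = x" by blast
    obtain b i where "p = (b, i)" by (cases p)
    thus "(\<exists>i\<in>{1..n}. t i = x) \<or> (\<exists>i\<in>{1..n}. s i = x)" using p by (cases b) (auto simp: vis_def)
  qed
qed


lemma vis_swap1:
  assumes "s m = x"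
  shows "vis (t(l := x)) (s(m := t l)) = vis t s \<circ> sw (True, l) (False, m)"
proof (rule ext)
  fix p :: "bool \<times> nat"
  obtain b i where p: "p = (b, i)" by (cases p)
  show "vis (t(l := x)) (s(m := t l)) p = (vis t s \<circ> sw (True, l) (False, m)) p"
    unfolding p using assms by (cases b) (auto simp: vis_def sw_def)
qed

lemma move1:
  assumes feas: "feasible n d t s" and l: "l \<in> {1..n}" and lt: "t l < x" and xd: "x \<le> d l"
    and xn: "x \<notin> t ` {1..n}" and db: "d l \<le> 2*n"
  shows "\<exists>t' s'. feasible n d t' s' \<and> sum t {1..n} < sum t' {1..n}"
proof -
  have sch: "is_schedule n t s" and fc: "\<forall>i\<in>{1..n}. t i \<le> d i \<and> (s i < t i \<or> s i \<le> t i + d i)"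
    using feas by (auto simp: feasible_def)
  have "x \<in> {1..2*n}" using lt xd db by auto
  then obtain m where m: "m \<in> {1..n}" "s m = x" using sched_facts(6)[OF sch] xn by blast
  define t' where "t' = t(l := x)"
  define s' where "s' = s(m := t l)"
  have "vis t' s' = vis t s \<circ> sw (True, l) (False, m)"
    unfolding t'_def s'_def using vis_swap1[of s m x t l] m(2) by simp
  hence sch': "is_schedule n t' s'"
    using bij_sw[of "vis t s" "UNIV \<times> {1..n}" "{1..2*n}" "(True, l)" "(False, m)"] sch l m
    by (auto simp: sched_vis)
  have fc': "\<forall>i\<in>{1..n}. t' i \<le> d i \<and> (s' i < t' i \<or> s' i \<le> t' i + d i)"
  proof
    fix i assume i: "i \<in> {1..n}"
    show "t' i \<le> d i \<and> (s' i < t' i \<or> s' i \<le> t' i + d i)"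
    proof (cases "i = l")
      case True
      show ?thesis
      proof (cases "m = l")
        case True
        thus ?thesis using \<open>i = l\<close> xd lt unfolding t'_def s'_def by simp
      next
        case False
        have "s l < t l \<or> s l \<le> t l + d l" using fc l by blast
        thus ?thesis using \<open>i = l\<close> False xd lt unfolding t'_def s'_def by auto
      qed
    next
      case False
      show ?thesis
      proof (cases "i = m")
        case True
        have "s m < t m \<or> s m \<le> t m + d m" using fc m by blast
        thus ?thesis using True \<open>i \<noteq> l\<close> fc i lt m unfolding t'_def s'_def by auto
      next
        case False
        thus ?thesis using \<open>i \<noteq> l\<close> fc i unfolding t'_def s'_def by auto
      qed
    qed
  qed
  have "sum t' {1..n} = t' l + sum t' ({1..n} - {l})" using l by (simp add: sum.remove)
  also have "sum t' ({1..n} - {l}) = sum t ({1..n} - {l})" unfolding t'_def by (rule sum.cong) auto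
  also have "t' l = x" unfolding t'_def by simp
  finally have "sum t' {1..n} = x + sum t ({1..n} - {l})" .
  moreover have "sum t {1..n} = t l + sum t ({1..n} - {l})" using l by (simp add: sum.remove)
  ultimately have "sum t {1..n} < sum t' {1..n}" using lt by linarith
  thus ?thesis using sch' fc' by (auto simp: feasible_def)
qed

lemma step1:
  assumes bound: "\<forall>i\<in>{1..n}. d i \<le> 2*n"
  shows "feasible n d t s \<Longrightarrow> \<exists>t' s'. feasible n d t' s' \<and>
           (\<forall>l\<in>{1..n}. \<forall>x. t' l < x \<and> x \<le> d l \<longrightarrow> x \<in> t' ` {1..n})"
proof (induction "2*n*n - sum t {1..n}" arbitrary: t s rule: less_induct)
  case less
  show ?case
  proof (cases "\<forall>l\<in>{1..n}. \<forall>x. t l < x \<and> x \<le> d l \<longrightarrow> x \<in> t ` {1..n}")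
    case True thus ?thesis using less.prems by blast
  next
    case False
    then obtain l x where lx: "l \<in> {1..n}" "t l < x" "x \<le> d l" "x \<notin> t ` {1..n}" by blast
    then obtain t' s' where ts: "feasible n d t' s'" "sum t {1..n} < sum t' {1..n}"
      using move1[OF less.prems lx] bound by blast
    have "\<forall>i\<in>{1..n}. t' i \<le> 2*n"
      using sched_facts(1)[of n t' s'] ts(1) by (auto simp: feasible_def)
    hence "sum t' {1..n} \<le> of_nat (card {1..n}) * (2*n)" using sum_bounded_above[of "{1..n}" t' "2*n"] by blast
    hence "sum t' {1..n} \<le> 2*n*n" by simp
    hence "2*n*n - sum t' {1..n} < 2*n*n - sum t {1..n}" using ts(2) by linarith
    thus ?thesis using less.hyps ts(1) by blast
  qed
qed

lemma sum2:
  assumes "finite N" "i \<in> N" "j \<in> N" "i \<noteq> j"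
  shows "sum g N = g i + g j + sum g (N - {i, j})"
proof -
  have "sum g N = g i + sum g (N - {i})" using assms by (simp add: sum.remove)
  also have "sum g (N - {i}) = g j + sum g (N - {i} - {j})" using assms by (simp add: sum.remove)
  also have "N - {i} - {j} = N - {i, j}" by auto
  finally show ?thesis by (simp add: add.assoc)
qed

lemma vis_swap2:
  "vis t (s(i := s j, j := s i)) = vis t s \<circ> sw (False, i) (False, j)"
proof (rule ext)
  fix p :: "bool \<times> nat"
  obtain b k where p: "p = (b, k)" by (cases p)
  show "vis t (s(i := s j, j := s i)) p = (vis t s \<circ> sw (False, i) (False, j)) p"
    unfolding p by (cases b) (auto simp: vis_def sw_def)
qed

lemma rearr: "(a::nat) < b \<Longrightarrow> (c::nat) < e \<Longrightarrow> a * e + b * c < b * e + a * c"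
proof -
  assume "a < b" "c < e"
  then obtain p q where "b = Suc (a + p)" "e = Suc (c + q)" by (blast dest: less_imp_Suc_add)
  thus ?thesis by (simp add: algebra_simps)
qed

lemma swap2:
  assumes feas: "feasible n d t s" and gaps: "\<forall>l\<in>{1..n}. is_gap d n (s l)"
    and i: "i \<in> {1..n}" and j: "j \<in> {1..n}" and sij: "s i < s j"
    and dij: "d j + t j < d i + t i"
  shows "\<exists>s'. feasible n d t s' \<and> (\<forall>l\<in>{1..n}. is_gap d n (s' l)) \<and>
     (\<Sum>l\<in>{1..n}. s l * (d l + t l)) < (\<Sum>l\<in>{1..n}. s' l * (d l + t l))"
proof -
  have sch: "is_schedule n t s" and fc: "\<forall>i\<in>{1..n}. t i \<le> d i \<and> (s i < t i \<or> s i \<le> t i + d i)"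
    using feas by (auto simp: feasible_def)
  have ij: "i \<noteq> j" using sij by auto
  define s' where "s' = s(i := s j, j := s i)"
  have "vis t s' = vis t s \<circ> sw (False, i) (False, j)" unfolding s'_def by (rule vis_swap2)
  hence sch': "is_schedule n t s'"
    using bij_sw[of "vis t s" "UNIV \<times> {1..n}" "{1..2*n}" "(False, i)" "(False, j)"] sch i j
    by (auto simp: sched_vis)
  have "s j < t j \<or> s j \<le> t j + d j" using fc j by blast
  hence si: "s j \<le> t j + d j" by linarith
  have fc': "\<forall>k\<in>{1..n}. t k \<le> d k \<and> (s' k < t k \<or> s' k \<le> t k + d k)"
  proof
    fix k assume k: "k \<in> {1..n}"
    show "t k \<le> d k \<and> (s' k < t k \<or> s' k \<le> t k + d k)"
    proof (cases "k = i")
      case True thus ?thesis using fc k si dij ij unfolding s'_def by auto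
    next
      case False
      show ?thesis
      proof (cases "k = j")
        case True thus ?thesis using fc k si sij unfolding s'_def by auto
      next
        case False
        thus ?thesis using \<open>k \<noteq> i\<close> fc k unfolding s'_def by auto
      qed
    qed
  qed
  have gaps': "\<forall>l\<in>{1..n}. is_gap d n (s' l)" using gaps i j unfolding s'_def by auto
  let ?g = "\<lambda>l. s l * (d l + t l)" and ?g' = "\<lambda>l. s' l * (d l + t l)"
  have e1: "sum ?g {1..n} = ?g i + ?g j + sum ?g ({1..n} - {i, j})" by (rule sum2) (use i j ij in auto)
  have e2: "sum ?g' {1..n} = ?g' i + ?g' j + sum ?g' ({1..n} - {i, j})" by (rule sum2) (use i j ij in auto)
  have e3: "sum ?g' ({1..n} - {i, j}) = sum ?g ({1..n} - {i, j})" unfolding s'_def by (rule sum.cong) auto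
  have "s' i = s j" "s' j = s i" unfolding s'_def using ij by auto
  hence "?g' i + ?g' j = s j * (d i + t i) + s i * (d j + t j)" by simp
  moreover have "s i * (d i + t i) + s j * (d j + t j) < s j * (d i + t i) + s i * (d j + t j)"
    by (rule rearr[OF sij dij])
  ultimately have "?g i + ?g j < ?g' i + ?g' j" by simp
  hence lt: "sum ?g {1..n} < sum ?g' {1..n}" using e1 e2 e3 by linarith
  have "feasible n d t s'" unfolding feasible_def using sch' fc' by blast
  thus ?thesis using gaps' lt by blast
qed

lemma step2:
  assumes bound: "\<forall>i\<in>{1..n}. d i \<le> 2*n"
  shows "feasible n d t s \<Longrightarrow> (\<forall>l\<in>{1..n}. is_gap d n (s l)) \<Longrightarrow>
     \<exists>s'. feasible n d t s' \<and> (\<forall>l\<in>{1..n}. is_gap d n (s' l)) \<and>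
       (\<forall>i\<in>{1..n}. \<forall>j\<in>{1..n}. s' i < s' j \<longrightarrow> induced_deadline d t i \<le> induced_deadline d t j)"
proof (induction "n * (2*n * (4*n)) - (\<Sum>l\<in>{1..n}. s l * (d l + t l))" arbitrary: s rule: less_induct)
  case less
  show ?case
  proof (cases "\<forall>i\<in>{1..n}. \<forall>j\<in>{1..n}. s i < s j \<longrightarrow> induced_deadline d t i \<le> induced_deadline d t j")
    case True thus ?thesis using less.prems by blast
  next
    case False
    then obtain i j where ij: "i \<in> {1..n}" "j \<in> {1..n}" "s i < s j" "d j + t j < d i + t i"
      by (auto simp: induced_deadline_def)
    then obtain s' where ss: "feasible n d t s'" "\<forall>l\<in>{1..n}. is_gap d n (s' l)"
      "(\<Sum>l\<in>{1..n}. s l * (d l + t l)) < (\<Sum>l\<in>{1..n}. s' l * (d l + t l))"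
      using swap2[OF less.prems ij] by blast
    have "\<forall>l\<in>{1..n}. s' l * (d l + t l) \<le> 2*n * (4*n)"
    proof
      fix l assume l: "l \<in> {1..n}"
      have "s' l \<le> 2*n" "t l \<le> 2*n"
        using sched_facts(1,2)[of n t s' l] ss(1) l by (auto simp: feasible_def)
      moreover have "d l \<le> 2*n" using bound l by auto
      ultimately have "d l + t l \<le> 4*n" by linarith
      with \<open>s' l \<le> 2*n\<close> show "s' l * (d l + t l) \<le> 2*n * (4*n)" by (rule mult_le_mono)
    qed
    hence "(\<Sum>l\<in>{1..n}. s' l * (d l + t l)) \<le> of_nat (card {1..n}) * (2*n * (4*n))"
      using sum_bounded_above[of "{1..n}" "\<lambda>l. s' l * (d l + t l)" "2*n * (4*n)"] by blast
    hence "(\<Sum>l\<in>{1..n}. s' l * (d l + t l)) \<le> n * (2*n * (4*n))" by simp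
    hence "n * (2*n * (4*n)) - (\<Sum>l\<in>{1..n}. s' l * (d l + t l))
        < n * (2*n * (4*n)) - (\<Sum>l\<in>{1..n}. s l * (d l + t l))" using ss(3) by linarith
    thus ?thesis using less.hyps ss(1,2) by blast
  qed
qed

theorem theorem1:
  fixes n :: nat and d :: "nat \<Rightarrow> nat" and t s :: "nat \<Rightarrow> nat"
  assumes pos: "\<forall>i\<in>{1..n}. 0 < d i"
    and mono: "\<forall>i j. 1 \<le> i \<and> i \<le> j \<and> j \<le> n \<longrightarrow> d i \<le> d j"
    and disc_pos: "\<forall>i\<in>{1..n}. 0 < disc d n i"
    and bound: "\<forall>i\<in>{1..n}. d i \<le> 2 * n"
    and feas: "feasible n d t s"
  shows "\<exists>t' s'. feasible n d t' s'
           \<and> (\<forall>i\<in>{1..n}. is_gap d n (s' i))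
           \<and> (\<forall>i\<in>{1..n}. \<forall>j\<in>{1..n}. s' i < s' j \<longrightarrow>
                 induced_deadline d t' i \<le> induced_deadline d t' j)"
proof -
  obtain t1 s1 where f1: "feasible n d t1 s1"
    and cl: "\<forall>l\<in>{1..n}. \<forall>x. t1 l < x \<and> x \<le> d l \<longrightarrow> x \<in> t1 ` {1..n}"
    using step1[OF bound feas] by blast
  have sch1: "is_schedule n t1 s1" and fc1: "\<forall>i\<in>{1..n}. t1 i \<le> d i"
    using f1 by (auto simp: feasible_def)
  have it: "inj_on t1 {1..n}" using sched_facts(3)[OF sch1] by (auto intro: inj_onI)
  have chA: "\<forall>l\<in>{1..n}. \<forall>x. aa d n l < x \<and> x \<le> d l \<longrightarrow> x \<in> aa d n ` {1..n}"
    using aa_chain[OF mono disc_pos] by blast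
  have ad: "\<forall>l\<in>{1..n}. aa d n l \<le> d l" using aa_le_d[OF mono disc_pos] by blast
  have TA1: "t1 ` {1..n} = aa d n ` {1..n}"
    by (rule TA[OF it aa_inj[OF mono disc_pos] _ ad fc1 chA cl]) simp
  have gaps1: "\<forall>l\<in>{1..n}. is_gap d n (s1 l)"
  proof
    fix l assume l: "l \<in> {1..n}"
    have "s1 l \<in> {1..2*n}" using sched_facts(2)[OF sch1 l] .
    moreover have "s1 l \<notin> t1 ` {1..n}" using sched_facts(5)[OF sch1] l by force
    ultimately show "is_gap d n (s1 l)" using gap_iff[OF mono disc_pos] TA1 by auto
  qed
  obtain s2 where "feasible n d t1 s2" "\<forall>l\<in>{1..n}. is_gap d n (s2 l)"
    "\<forall>i\<in>{1..n}. \<forall>j\<in>{1..n}. s2 i < s2 j \<longrightarrow> induced_deadline d t1 i \<le> induced_deadline d t1 j"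
    using step2[OF bound f1 gaps1] by blast
  thus ?thesis by blast
qed

end
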